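(* Let $G=(V,E)$ be a classical graph with vertex set $V=[n]$ and let $f\colon V \to \mathbb{C}^d$ be an orthogonal representation of $G$ in locally general position. Let $\phi\colon M_n\to M_d$ be given by $\phi(X) = \sum_{i=1}^n |f(i)\rangle\langle e_i| X |e_i\rangle\langle f(i)|$ for all $X\in M_n$ (an orthogonal representation of $\mathcal{S}_G=\operatorname{span}\{|e_i\rangle\langle e_j| : i=j\text{ or } i \text{ adjacent to } j\}$). Then $\phi$ is in locally general position.
   Context: $(|e_k\rangle)$ is the standard basis of $\mathbb{C}^n$. A classical orthogonal representation of $G$ is a map $f\colon V\to\mathbb{C}^d$ such that $f(i)\perp f(j)$ whenever $i\neq j$ and $i,j$ are not adjacent; it is in locally general position if for each fixed vertex, the vectors $f(j)$ representing the vertices $j$ nonadjacent to it are linearly independent. Elements $a,b$ of a $C^*$-algebra are orthogonal if $ab=ba=a^*b=ab^*=0$. For a quantum graph $\mathcal{S}\subseteq M_n$ (a subspace closed under adjoints containing $I_n$), a completely positive map $\phi\colon M_n\to M_d$ is an orthogonal representation of $\mathcal{S}$ if $\phi(A)\perp\phi(B)$ for all $A,B\in M_n$ with $A\mathcal{S}B=B\mathcal{S}A=A^*\mathcal{S}B=A\mathcal{S}B^*=\{0\}$. Such $\phi$ is in locally general position if for every nonzero projection $Q\in M_n$ and every projection $P\in M_n$ with $Q\mathcal{S}P=\{0\}$ one has $\operatorname{rank}(\phi(P))\ge\operatorname{rank}(P)$. *)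

theory Defs
  imports "Jordan_Normal_Form.Schur_Decomposition" "Jordan_Normal_Form.DL_Rank"
begin

definition simple_graph :: "nat \<Rightarrow> (nat \<Rightarrow> nat \<Rightarrow> bool) \<Rightarrow> bool" where
  "simple_graph n E \<longleftrightarrow> (\<forall>i<n. \<forall>j<n. E i j \<longleftrightarrow> E j i) \<and> (\<forall>i<n. \<not> E i i)"

definition orth_rep :: "nat \<Rightarrow> (nat \<Rightarrow> nat \<Rightarrow> bool) \<Rightarrow> nat \<Rightarrow> (nat \<Rightarrow> complex vec) \<Rightarrow> bool" where
  "orth_rep n E d f \<longleftrightarrow> (\<forall>i<n. f i \<in> carrier_vec d) \<and>
     (\<forall>i<n. \<forall>j<n. i \<noteq> j \<and> \<not> E i j \<longrightarrow> f i \<bullet>c f j = 0)"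

definition lin_indep_family :: "nat set \<Rightarrow> (nat \<Rightarrow> complex vec) \<Rightarrow> nat \<Rightarrow> bool" where
  "lin_indep_family J f d \<longleftrightarrow>
     (\<forall>c :: nat \<Rightarrow> complex. finsum_vec TYPE(complex) d (\<lambda>j. c j \<cdot>\<^sub>v f j) J = 0\<^sub>v d
        \<longrightarrow> (\<forall>j\<in>J. c j = 0))"

definition orth_rep_lgp :: "nat \<Rightarrow> (nat \<Rightarrow> nat \<Rightarrow> bool) \<Rightarrow> nat \<Rightarrow> (nat \<Rightarrow> complex vec) \<Rightarrow> bool" where
  "orth_rep_lgp n E d f \<longleftrightarrow> orth_rep n E d f \<and>
     (\<forall>i<n. lin_indep_family {j. j < n \<and> j \<noteq> i \<and> \<not> E i j} f d)"

text \<open>Quantum graph S_G = span{|e_i><e_j| : i = j or i ~ j}, i.e. the n x n matrices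
  supported on the diagonal and the edges.\<close>
definition S_G :: "nat \<Rightarrow> (nat \<Rightarrow> nat \<Rightarrow> bool) \<Rightarrow> complex mat set" where
  "S_G n E = {A \<in> carrier_mat n n. \<forall>i<n. \<forall>j<n. A $$ (i,j) \<noteq> 0 \<longrightarrow> i = j \<or> E i j}"

definition is_projection :: "nat \<Rightarrow> complex mat \<Rightarrow> bool" where
  "is_projection n P \<longleftrightarrow> P \<in> carrier_mat n n \<and> P * P = P \<and> mat_adjoint P = P"

text \<open>phi(X) = sum_i |f(i)><e_i| X |e_i><f(i)| = sum_i X_ii |f(i)><f(i)|.\<close>
definition phi_of :: "nat \<Rightarrow> nat \<Rightarrow> (nat \<Rightarrow> complex vec) \<Rightarrow> complex mat \<Rightarrow> complex mat" where
  "phi_of n d f X = mat d d (\<lambda>(a,b). \<Sum>i<n. (f i $ a) * X $$ (i,i) * cnj (f i $ b))"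

definition cp_lgp :: "nat \<Rightarrow> nat \<Rightarrow> complex mat set \<Rightarrow> (complex mat \<Rightarrow> complex mat) \<Rightarrow> bool" where
  "cp_lgp n d S phi \<longleftrightarrow>
     (\<forall>Q P. is_projection n Q \<and> Q \<noteq> 0\<^sub>m n n \<and> is_projection n P \<and>
            (\<forall>A\<in>S. Q * A * P = 0\<^sub>m n n)
        \<longrightarrow> vec_space.rank d (phi P) \<ge> vec_space.rank n P)"

end

theory Submission imports Defs begin

context vec_space begin

lemma rank_mono_span:
  assumes A: "A \<in> carrier_mat n na" and B: "B \<in> carrier_mat n nb"
    and sub: "set (cols A) \<subseteq> span (set (cols B))"
  shows "rank A \<le> rank B"
proof -
  define Wb where "Wb = span (set (cols B))"
  have sW: "VectorSpace.subspace class_ring Wb V"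
    unfolding Wb_def using B cols_dim carrier_matD(1) span_is_subspace by (metis)
  have "span (set (cols A)) \<subseteq> Wb"
    using sub unfolding Wb_def
    by (metis B carrier_matD(1) cols_dim span_is_submodule span_is_subset)
  moreover have sA: "VectorSpace.subspace class_ring (span (set (cols A))) V"
    by (metis A cols_dim carrier_matD(1) span_is_subspace)
  ultimately have subspace: "VectorSpace.subspace class_ring (span (set (cols A))) (vs Wb)"
    using nested_subspaces[OF sW sA] by blast
  have fW: "vectorspace.fin_dim class_ring (vs Wb)" unfolding Wb_def using B fin_dim_span_cols by blast
  have fA: "vectorspace.fin_dim class_ring (span_vs (set (cols A)))" using A fin_dim_span_cols by blast
  have "rank A \<le> vectorspace.dim class_ring (vs Wb)" unfolding rank_def
    using vectorspace.subspace_dim[OF subspace_is_vs[OF sW] subspace fW] fA by auto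
  then show ?thesis unfolding rank_def Wb_def .
qed

lemma rank_mult_le:
  assumes B: "B \<in> carrier_mat n nb" and C: "C \<in> carrier_mat nb nc"
  shows "rank (B * C) \<le> rank B"
proof (rule rank_mono_span[OF _ B])
  show "B * C \<in> carrier_mat n nc" using B C by auto
  show "set (cols (B * C)) \<subseteq> span (set (cols B))"
  proof
    fix x assume "x \<in> set (cols (B * C))"
    then obtain j where j: "j < nc" "x = col (B * C) j"
      using B C by (metis cols_length cols_nth in_set_conv_nth carrier_matD(2) index_mult_mat(3))
    then have "x = B *\<^sub>v col C j" using B C by auto
    moreover have "col C j \<in> carrier_vec nb" using C j by auto
    ultimately have "x \<in> col_space B" using col_space_eq[OF B] B C by auto
    then show "x \<in> span (set (cols B))" unfolding col_space_def .
  qed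
qed

lemma rank_trivial_kernel:
  assumes A: "A \<in> carrier_mat n m"
    and ker: "\<And>v. v \<in> carrier_vec m \<Longrightarrow> A *\<^sub>v v = 0\<^sub>v n \<Longrightarrow> v = 0\<^sub>v m"
  shows "rank A = m"
proof -
  have dist: "distinct (cols A)"
  proof (rule ccontr)
    assume "\<not> distinct (cols A)"
    then obtain i j where ij: "i < m" "j < m" "i \<noteq> j" "cols A ! i = cols A ! j"
      using A by (metis distinct_conv_nth cols_length carrier_matD(2))
    then have cij: "col A i = col A j" using A by auto
    define v where "v = (unit_vec m i - unit_vec m j :: 'a vec)"
    have vc: "v \<in> carrier_vec m" unfolding v_def by auto
    have "A *\<^sub>v v = 0\<^sub>v n"
    proof (rule eq_vecI)
      show "dim_vec (A *\<^sub>v v) = dim_vec (0\<^sub>v n)" using A by auto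
      fix a assume "a < dim_vec (0\<^sub>v n)"
      then have a: "a < n" by auto
      have "(A *\<^sub>v v) $ a = (\<Sum>k<m. A $$ (a,k) * v $ k)"
        using A a vc by (simp add: scalar_prod_def atLeast0LessThan)
      also have "\<dots> = (\<Sum>k<m. (if k = i then A $$ (a,k) else 0) - (if k = j then A $$ (a,k) else 0))"
        by (intro sum.cong) (auto simp: v_def unit_vec_def)
      also have "\<dots> = (\<Sum>k<m. if k = i then A $$ (a,k) else 0) - (\<Sum>k<m. if k = j then A $$ (a,k) else 0)"
        by (rule sum_subtractf)
      also have "\<dots> = A $$ (a,i) - A $$ (a,j)"
        using ij by (simp only: sum.delta finite_lessThan) simp
      also have "\<dots> = 0"
      proof -
        have "col A i $ a = col A j $ a" using cij by simp
        then show ?thesis using A a ij by simp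
      qed
      finally show "(A *\<^sub>v v) $ a = 0\<^sub>v n $ a" using a by auto
    qed
    then have "v = 0\<^sub>v m" using ker vc by auto
    then have "v $ i = 0" by (simp add: ij)
    then show False unfolding v_def using ij by auto
  qed
  have "\<not> lin_dep (set (cols A))"
  proof
    assume "lin_dep (set (cols A))"
    then obtain v where "v \<in> carrier_vec m" "v \<noteq> 0\<^sub>v m" "A *\<^sub>v v = 0\<^sub>v n"
      using lin_depE[OF A _ dist] by blast
    then show False using ker by blast
  qed
  then show ?thesis using lin_indpt_full_rank[OF A dist] by blast
qed

end

lemma adj_idx:
  assumes "A \<in> carrier_mat n n" "i < n" "j < n"
  shows "mat_adjoint A $$ (i,j) = cnj (A $$ (j,i))"
  using assms by (simp add: mat_adjoint_def mat_of_rows_def)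

lemma proj_diag:
  assumes P: "is_projection n P" and j: "j < n"
  shows "P $$ (j,j) = of_real (\<Sum>k<n. (cmod (P $$ (k,j)))\<^sup>2)"
proof -
  have Pc: "P \<in> carrier_mat n n" and PP: "P * P = P" and adj: "mat_adjoint P = P"
    using P unfolding is_projection_def by auto
  have "P $$ (j,j) = (P * P) $$ (j,j)" using PP by simp
  also have "\<dots> = (\<Sum>k<n. P $$ (j,k) * P $$ (k,j))"
    using Pc j by (simp add: scalar_prod_def atLeast0LessThan)
  also have "\<dots> = (\<Sum>k<n. cnj (P $$ (k,j)) * P $$ (k,j))"
  proof (intro sum.cong refl)
    fix k assume "k \<in> {..<n}"
    then have "P $$ (j,k) = mat_adjoint P $$ (j,k)" using adj by simp
    also have "\<dots> = cnj (P $$ (k,j))" using adj_idx[OF Pc j] \<open>k \<in> {..<n}\<close> by auto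
    finally show "P $$ (j,k) * P $$ (k,j) = cnj (P $$ (k,j)) * P $$ (k,j)" by simp
  qed
  also have "\<dots> = (\<Sum>k<n. of_real ((cmod (P $$ (k,j)))\<^sup>2))"
    by (intro sum.cong refl) (metis complex_norm_square mult.commute)
  finally show ?thesis by simp
qed

lemma proj_col_zero:
  assumes P: "is_projection n P" and j: "j < n" and z: "P $$ (j,j) = 0" and k: "k < n"
  shows "P $$ (k,j) = 0"
proof -
  have "(\<Sum>k<n. (cmod (P $$ (k,j)))\<^sup>2) = 0" using proj_diag[OF P j] z by (metis of_real_eq_0_iff)
  then have "\<forall>k\<in>{..<n}. (cmod (P $$ (k,j)))\<^sup>2 = 0"
    by (subst sum_nonneg_eq_0_iff[symmetric]) auto
  then show ?thesis using k by auto
qed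


lemma wsum_zero:
  fixes w :: "nat \<Rightarrow> complex" and r :: "nat \<Rightarrow> real"
  assumes fin: "finite A" and pos: "\<And>b. b \<in> A \<Longrightarrow> r b > 0"
    and s: "(\<Sum>b\<in>A. complex_of_real (r b) * (cnj (w b) * w b)) = 0" and b: "b \<in> A"
  shows "w b = 0"
proof -
  have "(\<Sum>b\<in>A. complex_of_real (r b) * (cnj (w b) * w b)) = (\<Sum>b\<in>A. complex_of_real (r b * (cmod (w b))\<^sup>2))"
    by (intro sum.cong refl) (simp only: of_real_mult complex_norm_square mult.commute[of "cnj (w _)"])
  also have "\<dots> = complex_of_real (\<Sum>b\<in>A. r b * (cmod (w b))\<^sup>2)" by (rule of_real_sum[symmetric])
  finally have "complex_of_real (\<Sum>b\<in>A. r b * (cmod (w b))\<^sup>2) = 0" using s by simp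
  then have "(\<Sum>b\<in>A. r b * (cmod (w b))\<^sup>2) = 0" by (metis of_real_eq_0_iff)
  then have "\<forall>b\<in>A. r b * (cmod (w b))\<^sup>2 = 0"
    by (subst sum_nonneg_eq_0_iff[symmetric]) (auto simp: fin intro!: mult_nonneg_nonneg less_imp_le[OF pos])
  then have "r b * (cmod (w b))\<^sup>2 = 0" using b by blast
  then show ?thesis using pos[OF b] by simp
qed

lemma (in vec_space) cols_in_span:
  assumes A: "A \<in> carrier_mat n na" and B: "B \<in> carrier_mat n nb"
    and h: "\<And>j. j < na \<Longrightarrow> col A j = 0\<^sub>v n \<or> (\<exists>t<nb. col A j = col B t)"
  shows "set (cols A) \<subseteq> span (set (cols B))"
proof
  have sB: "set (cols B) \<subseteq> carrier_vec n" using B cols_dim by blast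
  fix x assume "x \<in> set (cols A)"
  then obtain j where j: "j < na" "x = col A j"
    using A by (metis cols_length cols_nth in_set_conv_nth carrier_matD(2))
  show "x \<in> span (set (cols B))"
  proof (cases "col A j = 0\<^sub>v n")
    case True
    then show ?thesis using j sB by (metis span_is_submodule submodule.zero_closed module_vec_simps(2))
  next
    case False
    then obtain t where t: "t < nb" "col A j = col B t" using h j by blast
    then have "x \<in> set (cols B)" using j B by (metis cols_length cols_nth nth_mem carrier_matD(2))
    then show ?thesis using sB span_mem by blast
  qed
qed

theorem proposition5p8:
  fixes n d :: nat and E :: "nat \<Rightarrow> nat \<Rightarrow> bool" and f :: "nat \<Rightarrow> complex vec"
  assumes "simple_graph n E"
    and "orth_rep_lgp n E d f"
  shows "cp_lgp n d (S_G n E) (phi_of n d f)"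
proof -
  have orth: "orth_rep n E d f"
    and li: "\<And>i. i < n \<Longrightarrow> lin_indep_family {j. j < n \<and> j \<noteq> i \<and> \<not> E i j} f d"
    using assms(2) unfolding orth_rep_lgp_def by auto
  have fc: "\<And>i. i < n \<Longrightarrow> f i \<in> carrier_vec d" using orth unfolding orth_rep_def by auto
  show ?thesis unfolding cp_lgp_def
  proof (intro allI impI, elim conjE)
    fix Q P
    assume Qp: "is_projection n Q" and Qnz: "Q \<noteq> 0\<^sub>m n n" and Pp: "is_projection n P"
      and QAP: "\<forall>A\<in>S_G n E. Q * A * P = 0\<^sub>m n n"
    have Qc: "Q \<in> carrier_mat n n" and Pc: "P \<in> carrier_mat n n"
      using Qp Pp unfolding is_projection_def by auto
    have "\<exists>a<n. \<exists>i0<n. Q $$ (a,i0) \<noteq> 0"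
    proof (rule ccontr)
      assume "\<not> ?thesis"
      then have "Q = 0\<^sub>m n n" using Qc by (intro eq_matI) auto
      with Qnz show False by simp
    qed
    then obtain a i0 where a: "a < n" and i0: "i0 < n" and Qa: "Q $$ (a,i0) \<noteq> 0" by blast
    define J where "J = {j. j < n \<and> j \<noteq> i0 \<and> \<not> E i0 j}"
    have Pzero: "P $$ (j,b) = 0" if j: "j < n" "j \<notin> J" and b: "b < n" for j b
    proof -
      define A where "A = mat n n (\<lambda>(r,c). if r = i0 \<and> c = j then (1::complex) else 0)"
      have "A \<in> S_G n E" unfolding S_G_def A_def using j i0 by (auto simp: J_def)
      then have "Q * A * P = 0\<^sub>m n n" using QAP by auto
      then have z: "(Q * A * P) $$ (a,b) = 0" using a b by simp
      have QA: "(Q * A) $$ (a,c) = (if c = j then Q $$ (a,i0) else 0)" if c: "c < n" for c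
      proof -
        have "(Q * A) $$ (a,c) = (\<Sum>r<n. Q $$ (a,r) * A $$ (r,c))"
          using Qc a c by (simp add: A_def scalar_prod_def atLeast0LessThan)
        also have "\<dots> = (\<Sum>r<n. if r = i0 then (if c = j then Q $$ (a,i0) else 0) else 0)"
          by (intro sum.cong refl) (auto simp: A_def c)
        also have "\<dots> = (if c = j then Q $$ (a,i0) else 0)" using i0 by simp
        finally show ?thesis .
      qed
      have "(Q * A * P) $$ (a,b) = (\<Sum>c<n. (Q * A) $$ (a,c) * P $$ (c,b))"
        using Qc Pc a b by (simp add: A_def scalar_prod_def atLeast0LessThan)
      also have "\<dots> = (\<Sum>c<n. if c = j then Q $$ (a,i0) * P $$ (j,b) else 0)"
        by (intro sum.cong refl) (simp add: QA)
      also have "\<dots> = Q $$ (a,i0) * P $$ (j,b)" using j by simp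
      finally show "P $$ (j,b) = 0" using Qa z by simp
    qed
    define K where "K = {j. j < n \<and> P $$ (j,j) \<noteq> 0}"
    have KJ: "K \<subseteq> J" using Pzero unfolding K_def by blast
    have finK: "finite K" unfolding K_def by auto
    have Kn: "K \<subseteq> {..<n}" unfolding K_def by auto
    define ks where "ks = sorted_list_of_set K"
    define m where "m = length ks"
    have dks: "distinct ks" and sks: "set ks = K" using finK unfolding ks_def by auto
    have bij: "bij_betw ((!) ks) {..<m} K" unfolding m_def by (rule bij_betw_nth[OF dks refl sks[symmetric]])
    have reK: "(\<Sum>j\<in>K. h j) = (\<Sum>t<m. h (ks ! t))" for h :: "nat \<Rightarrow> complex"
      using sum.reindex_bij_betw[OF bij, of h] by simp
    have ksK: "ks ! t \<in> K" if "t < m" for t using that sks m_def by auto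
    have mK: "m = card K" using dks sks m_def distinct_card by metis
    define B where "B = mat n m (\<lambda>(r,t). P $$ (r, ks ! t))"
    have Bc: "B \<in> carrier_mat n m" unfolding B_def by auto
    have "vec_space.rank n P \<le> vec_space.rank n B"
    proof (rule vec_space.rank_mono_span[OF Pc Bc], rule vec_space.cols_in_span[OF Pc Bc])
      fix j assume j: "j < n"
      show "col P j = 0\<^sub>v n \<or> (\<exists>t<m. col P j = col B t)"
      proof (cases "j \<in> K")
        case True
        then obtain t where t: "t < m" "ks ! t = j" using sks m_def by (metis in_set_conv_nth)
        have "col P j = col B t" using t j Pc by (intro eq_vecI) (auto simp: B_def)
        then show ?thesis using t by blast
      next
        case False
        then have "P $$ (j,j) = 0" using j K_def by auto
        then have "col P j = 0\<^sub>v n" using proj_col_zero[OF Pp j] j Pc by (intro eq_vecI) auto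
        then show ?thesis by blast
      qed
    qed
    also have "\<dots> \<le> m" using vec_space.rank_le_nc[OF Bc] .
    finally have up: "vec_space.rank n P \<le> m" .
    define g where "g t = f (ks ! t)" for t
    define q where "q t = P $$ (ks ! t, ks ! t)" for t
    define r where "r t = (\<Sum>k<n. (cmod (P $$ (k, ks ! t)))\<^sup>2)" for t
    have qr: "q t = complex_of_real (r t)" if "t < m" for t
      using proj_diag[OF Pp, of "ks ! t"] ksK[OF that] Kn unfolding q_def r_def by auto
    have rpos: "r t > 0" if "t < m" for t
    proof -
      have "r t \<ge> 0" unfolding r_def by (simp add: sum_nonneg)
      moreover have "q t \<noteq> 0" using ksK[OF that] unfolding q_def K_def by auto
      then have "r t \<noteq> 0" using qr[OF that] by auto
      ultimately show ?thesis by simp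
    qed
    define Phi where "Phi = phi_of n d f P"
    have Phic: "Phi \<in> carrier_mat d d" unfolding Phi_def phi_of_def by auto
    have Phi_idx: "Phi $$ (u,v) = (\<Sum>t<m. g t $ u * q t * cnj (g t $ v))" if "u < d" "v < d" for u v
    proof -
      have "Phi $$ (u,v) = (\<Sum>i<n. f i $ u * P $$ (i,i) * cnj (f i $ v))"
        unfolding Phi_def phi_of_def using that by simp
      also have "\<dots> = (\<Sum>i\<in>K. f i $ u * P $$ (i,i) * cnj (f i $ v))"
        by (rule sum.mono_neutral_right) (auto simp: K_def)
      also have "\<dots> = (\<Sum>t<m. g t $ u * q t * cnj (g t $ v))" unfolding reK g_def q_def ..
      finally show ?thesis .
    qed
    define F where "F = mat d m (\<lambda>(b,t). g t $ b)"
    have Fc: "F \<in> carrier_mat d m" unfolding F_def by auto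
    define N where "N = Phi * F"
    have Nc: "N \<in> carrier_mat d m" using Phic Fc N_def by auto
    have rankN: "vec_space.rank d N = m"
    proof (rule vec_space.rank_trivial_kernel[OF Nc])
      fix x :: "complex vec" assume xc: "x \<in> carrier_vec m" and Nx: "N *\<^sub>v x = 0\<^sub>v d"
      define y where "y = F *\<^sub>v x"
      have yc: "y \<in> carrier_vec d" unfolding y_def using Fc xc by auto
      have y_idx: "y $ b = (\<Sum>t<m. g t $ b * x $ t)" if "b < d" for b
        unfolding y_def F_def using that xc by (simp add: scalar_prod_def atLeast0LessThan)
      have Py: "Phi *\<^sub>v y = 0\<^sub>v d"
        using Nx unfolding N_def y_def using assoc_mult_mat_vec[OF Phic Fc xc] by simp
      define z where "z t = (\<Sum>b<d. cnj (g t $ b) * y $ b)" for t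
      have Py_idx: "(Phi *\<^sub>v y) $ u = (\<Sum>t<m. g t $ u * q t * z t)" if u: "u < d" for u
      proof -
        have "(Phi *\<^sub>v y) $ u = (\<Sum>b<d. Phi $$ (u,b) * y $ b)"
          using Phic yc u by (simp add: scalar_prod_def atLeast0LessThan)
        also have "\<dots> = (\<Sum>b<d. (\<Sum>t<m. g t $ u * q t * cnj (g t $ b)) * y $ b)"
          by (intro sum.cong refl) (simp add: Phi_idx u)
        also have "\<dots> = (\<Sum>b<d. \<Sum>t<m. g t $ u * q t * cnj (g t $ b) * y $ b)"
          by (simp add: sum_distrib_right)
        also have "\<dots> = (\<Sum>t<m. \<Sum>b<d. g t $ u * q t * cnj (g t $ b) * y $ b)"
          by (rule sum.swap)
        also have "\<dots> = (\<Sum>t<m. g t $ u * q t * z t)"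
          by (simp add: z_def sum_distrib_left mult.assoc)
        finally show ?thesis .
      qed
      have S0: "(\<Sum>u<d. cnj (y $ u) * (Phi *\<^sub>v y) $ u) = 0"
        by (intro sum.neutral ballI) (simp add: Py)
      have "(\<Sum>u<d. cnj (y $ u) * (Phi *\<^sub>v y) $ u) = (\<Sum>u<d. \<Sum>t<m. cnj (y $ u) * (g t $ u * q t * z t))"
        by (intro sum.cong refl) (simp add: Py_idx sum_distrib_left)
      also have "\<dots> = (\<Sum>t<m. \<Sum>u<d. cnj (y $ u) * (g t $ u * q t * z t))" by (rule sum.swap)
      also have "\<dots> = (\<Sum>t<m. q t * z t * cnj (z t))"
      proof (intro sum.cong refl)
        fix t assume "t \<in> {..<m}"
        have "cnj (z t) = (\<Sum>b<d. g t $ b * cnj (y $ b))" unfolding z_def by (simp add: cnj_sum)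
        then show "(\<Sum>u<d. cnj (y $ u) * (g t $ u * q t * z t)) = q t * z t * cnj (z t)"
          by (simp add: sum_distrib_left sum_distrib_right mult_ac)
      qed
      also have "\<dots> = (\<Sum>t<m. complex_of_real (r t) * (cnj (z t) * z t))"
        by (intro sum.cong refl) (simp add: qr mult_ac)
      finally have S1: "(\<Sum>t<m. complex_of_real (r t) * (cnj (z t) * z t)) = 0" using S0 by simp
      have zt0: "z t = 0" if "t < m" for t
        by (rule wsum_zero[OF _ _ S1]) (auto simp: rpos that)
      have cy: "cnj (y $ b) = (\<Sum>t<m. cnj (x $ t) * cnj (g t $ b))" if "b < d" for b
        using y_idx[OF that] by (simp add: cnj_sum mult.commute)
      have "(\<Sum>b<d. cnj (y $ b) * y $ b) = (\<Sum>b<d. (\<Sum>t<m. cnj (x $ t) * cnj (g t $ b)) * y $ b)"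
        by (intro sum.cong refl) (simp add: cy)
      also have "\<dots> = (\<Sum>b<d. \<Sum>t<m. cnj (x $ t) * cnj (g t $ b) * y $ b)"
        by (simp add: sum_distrib_right)
      also have "\<dots> = (\<Sum>t<m. \<Sum>b<d. cnj (x $ t) * cnj (g t $ b) * y $ b)" by (rule sum.swap)
      also have "\<dots> = (\<Sum>t<m. cnj (x $ t) * z t)"
        by (simp add: z_def sum_distrib_left mult.assoc)
      also have "\<dots> = 0" by (intro sum.neutral ballI) (simp add: zt0)
      finally have yy: "(\<Sum>b<d. complex_of_real 1 * (cnj (y $ b) * y $ b)) = 0" by simp
      have y0: "y = 0\<^sub>v d"
      proof (rule eq_vecI)
        fix b assume "b < dim_vec (0\<^sub>v d)"
        then have b: "b < d" by simp
        have "y $ b = 0" by (rule wsum_zero[OF _ _ yy]) (auto simp: b)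
        then show "y $ b = 0\<^sub>v d $ b" using b by simp
      qed (use yc in simp)
      define c where "c j = (if j \<in> K then x $ (the_inv_into {..<m} ((!) ks) j) else 0)" for j
      have cks: "c (ks ! t) = x $ t" if "t < m" for t
        using ksK[OF that] the_inv_into_f_f[OF bij_betw_imp_inj_on[OF bij]] that c_def by auto
      have finJ: "finite J" unfolding J_def by auto
      have cc: "(\<lambda>j. c j \<cdot>\<^sub>v f j) \<in> J \<rightarrow> carrier_vec d" using fc J_def by auto
      have "finsum_vec TYPE(complex) d (\<lambda>j. c j \<cdot>\<^sub>v f j) J = 0\<^sub>v d"
      proof (rule eq_vecI)
        show "dim_vec (finsum_vec TYPE(complex) d (\<lambda>j. c j \<cdot>\<^sub>v f j) J) = dim_vec (0\<^sub>v d)"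
          using finsum_vec_closed[OF cc] by simp
        fix b assume "b < dim_vec (0\<^sub>v d)"
        then have b: "b < d" by simp
        have "finsum_vec TYPE(complex) d (\<lambda>j. c j \<cdot>\<^sub>v f j) J $ b = (\<Sum>j\<in>J. (c j \<cdot>\<^sub>v f j) $ b)"
          by (rule index_finsum_vec[OF finJ b cc])
        also have "\<dots> = (\<Sum>j\<in>J. c j * f j $ b)"
        proof (intro sum.cong refl)
          fix j assume "j \<in> J"
          then have "f j \<in> carrier_vec d" using fc J_def by auto
          then show "(c j \<cdot>\<^sub>v f j) $ b = c j * f j $ b" using b by simp
        qed
        also have "\<dots> = (\<Sum>j\<in>K. c j * f j $ b)"
          by (rule sum.mono_neutral_right[OF finJ KJ]) (auto simp: c_def)
        also have "\<dots> = (\<Sum>t<m. c (ks ! t) * f (ks ! t) $ b)" by (rule reK)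
        also have "\<dots> = (\<Sum>t<m. g t $ b * x $ t)" by (intro sum.cong refl) (auto simp: cks g_def)
        also have "\<dots> = y $ b" using y_idx[OF b] by simp
        also have "\<dots> = 0" using y0 b by simp
        finally show "finsum_vec TYPE(complex) d (\<lambda>j. c j \<cdot>\<^sub>v f j) J $ b = 0\<^sub>v d $ b" using b by simp
      qed
      then have cJ: "\<forall>j\<in>J. c j = 0" using li[OF i0] unfolding lin_indep_family_def J_def by blast
      show "x = 0\<^sub>v m"
      proof (rule eq_vecI)
        fix t assume "t < dim_vec (0\<^sub>v m)"
        then have t: "t < m" by simp
        have "ks ! t \<in> J" using ksK[OF t] KJ by auto
        then have "x $ t = 0" using cJ cks[OF t] by auto
        then show "x $ t = 0\<^sub>v m $ t" using t by simp
      qed (use xc in simp)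
    qed
    have "vec_space.rank d N \<le> vec_space.rank d Phi"
      unfolding N_def by (rule vec_space.rank_mult_le[OF Phic Fc])
    then show "vec_space.rank n P \<le> vec_space.rank d (phi_of n d f P)"
      using up rankN unfolding Phi_def by simp
  qed
qed

end
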